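(* Let $(\mathcal{T},\Sigma)$ be a triangulated category and let $\mathcal{C}$ be an $(n-2)$-cluster tilting subcategory of $\mathcal{T}$ (for an integer $n\ge 4$) which is closed under $\Sigma^{n-2}$, and let $(\mathcal{C},\widehat{\Sigma})$, $\widehat{\Sigma}=\Sigma^{n-2}$, be the associated $n$-angulated category. Then there is a well-defined surjective group homomorphism $K_0(\mathcal{C})\to K_0(\mathcal{T})$ sending $[A]-[B]$ (computed in $K_0(\mathcal{C})$) to $[A]-[B]$ (computed in $K_0(\mathcal{T})$) for all objects $A,B$ of $\mathcal{C}$.
   Context: All categories are small. $(\mathcal{T},\Sigma)$ is a triangulated category (suspension $\Sigma$); $K_0(\mathcal{T})$ is its Grothendieck group: the free abelian group on isomorphism classes of objects modulo $\langle X\rangle-\langle Y\rangle+\langle Z\rangle$ for every triangle $X\to Y\to Z\to\Sigma X$; $[X]$ denotes the class of $X$. A full subcategory $\mathcal{C}\subseteq\mathcal{T}$ is contravariantly (resp. covariantly) finite if every object of $\mathcal{T}$ has a right (resp. left) $\mathcal{C}$-approximation, where a right $\mathcal{C}$-approximation of $X$ is a morphism $f:C\to X$ with $C\in\mathcal{C}$ such that every morphism $C'\to X$ with $C'\in\mathcal{C}$ factors through $f$ (left approximations dually); functorially finite means both. For $t\ge 2$, $\mathcal{C}$ is $t$-cluster tilting if it is functorially finite and $\mathcal{C}=\{A\in\mathcal{T}\mid \operatorname{Hom}_{\mathcal{T}}(A,\Sigma^iC)=0\text{ for }1\le i\le t-1,\ C\in\mathcal{C}\}=\{B\in\mathcal{T}\mid\operatorname{Hom}_{\mathcal{T}}(\Sigma^iC,B)=0\text{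 for }1\le i\le t-1,\ C\in\mathcal{C}\}$. If $\mathcal{C}$ is $(n-2)$-cluster tilting and closed under $\widehat{\Sigma}=\Sigma^{n-2}$, declare a sequence $A_1\xrightarrow{\alpha_1}A_2\to\cdots\xrightarrow{\alpha_{n-1}}A_n\xrightarrow{\alpha_n}\widehat{\Sigma}A_1$ in $\mathcal{C}$ to be an $n$-angle if there exist objects $X_1,\dots,X_{n-3}$ of $\mathcal{T}$ and triangles in $\mathcal{T}$: $A_1\xrightarrow{\alpha_1}A_2\xrightarrow{f_1}X_1\xrightarrow{\partial_{n-2}}\Sigma A_1$; $X_{i-1}\xrightarrow{g_{i-1}}A_{i+1}\xrightarrow{f_i}X_i\xrightarrow{\partial_{n-1-i}}\Sigma X_{i-1}$ for $2\le i\le n-3$; and $X_{n-3}\xrightarrow{g_{n-3}}A_{n-1}\xrightarrow{\alpha_{n-1}}A_n\xrightarrow{\partial_1}\Sigma X_{n-3}$, such that $\alpha_{i+1}=g_i\circ f_i$ for $1\le i\le n-3$ and $\alpha_n=\Sigma^{n-3}\partial_{n-2}\circ\Sigma^{n-4}\partial_{n-3}\circ\cdots\circ\partial_1$. By Geiss–Keller–Oppermann, $(\mathcal{C},\widehat{\Sigma})$ with these $n$-angles is an $n$-angulated category. Grothendieck group of an $n$-angulated category $(\mathcal{C},\widehat\Sigma)$: let $F(\mathcal{C})$ be the free abelian group on the isomorphism classes $\langle A\rangle$ of objects; for an $n$-angle $A_\bullet$ put $\chi(A_\bullet)=\sum_{i=1}^n(-1)^{i+1}\langle A_i\rangle$;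 $R(\mathcal{C})$ is the subgroup generated by all $\chi(A_\bullet)$, together with $\langle 0\rangle$ when $n$ is even; $K_0(\mathcal{C})=F(\mathcal{C})/R(\mathcal{C})$ with $[A]$ the class of $\langle A\rangle$. (Every element of $K_0(\mathcal{C})$ has the form $[A]-[B]$.) *)

theory Defs
  imports "HOL-Algebra.Coset" "HOL-Algebra.Generated_Groups"
begin

text \<open>Objects have type 'o, morphisms type 'm. src/tgt give domain/codomain,
  cmp g f is the composite g after f, madd/mzero/mneg the additive structure on
  Hom-sets, susp/suspm the suspension functor on objects/morphisms, and dtri the
  class of distinguished triangles (f,g,h) : X -> Y -> Z -> susp X.\<close>

record ('o,'m) tricat =
  obj   :: "'o set"
  mor   :: "'m set"
  src   :: "'m \<Rightarrow> 'o"
  tgt   :: "'m \<Rightarrow> 'o"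
  cmp   :: "'m \<Rightarrow> 'm \<Rightarrow> 'm"
  idm   :: "'o \<Rightarrow> 'm"
  madd  :: "'m \<Rightarrow> 'm \<Rightarrow> 'm"
  mzero :: "'o \<Rightarrow> 'o \<Rightarrow> 'm"
  mneg  :: "'m \<Rightarrow> 'm"
  susp  :: "'o \<Rightarrow> 'o"
  suspm :: "'m \<Rightarrow> 'm"
  dtri  :: "('m \<times> 'm \<times> 'm) set"

definition thom :: "('o,'m) tricat \<Rightarrow> 'o \<Rightarrow> 'o \<Rightarrow> 'm set" where
  "thom T X Y = {f \<in> mor T. src T f = X \<and> tgt T f = Y}"

definition is_category :: "('o,'m) tricat \<Rightarrow> bool" where
  "is_category T \<longleftrightarrow>
     (\<forall>f\<in>mor T. src T f \<in> obj T \<and> tgt T f \<in> obj T) \<and>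
     (\<forall>X\<in>obj T. idm T X \<in> thom T X X) \<and>
     (\<forall>X\<in>obj T. \<forall>Y\<in>obj T. \<forall>Z\<in>obj T. \<forall>f\<in>thom T X Y. \<forall>g\<in>thom T Y Z.
        cmp T g f \<in> thom T X Z) \<and>
     (\<forall>f\<in>mor T. \<forall>g\<in>mor T. \<forall>h\<in>mor T. tgt T f = src T g \<longrightarrow> tgt T g = src T h \<longrightarrow>
        cmp T h (cmp T g f) = cmp T (cmp T h g) f) \<and>
     (\<forall>f\<in>mor T. cmp T (idm T (tgt T f)) f = f \<and> cmp T f (idm T (src T f)) = f)"

definition is_iso :: "('o,'m) tricat \<Rightarrow> 'm \<Rightarrow> bool" where
  "is_iso T f \<longleftrightarrow> f \<in> mor T \<and>
     (\<exists>g\<in>thom T (tgt T f) (src T f). cmp T g f = idm T (src T f) \<and> cmp T f g = idm T (tgt T f))"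

definition isomorphic :: "('o,'m) tricat \<Rightarrow> 'o \<Rightarrow> 'o \<Rightarrow> bool" where
  "isomorphic T X Y \<longleftrightarrow> (\<exists>f\<in>thom T X Y. is_iso T f)"

definition is_preadditive :: "('o,'m) tricat \<Rightarrow> bool" where
  "is_preadditive T \<longleftrightarrow>
     (\<forall>X\<in>obj T. \<forall>Y\<in>obj T.
        mzero T X Y \<in> thom T X Y \<and>
        (\<forall>f\<in>thom T X Y. mneg T f \<in> thom T X Y \<and>
            madd T f (mzero T X Y) = f \<and> madd T f (mneg T f) = mzero T X Y) \<and>
        (\<forall>f\<in>thom T X Y. \<forall>g\<in>thom T X Y. madd T f g \<in> thom T X Y \<and> madd T f g = madd T g f) \<and>
        (\<forall>f\<in>thom T X Y. \<forall>g\<in>thom T X Y. \<forall>h\<in>thom T X Y.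
            madd T (madd T f g) h = madd T f (madd T g h))) \<and>
     (\<forall>X\<in>obj T. \<forall>Y\<in>obj T. \<forall>Z\<in>obj T.
        (\<forall>f\<in>thom T X Y. \<forall>g\<in>thom T Y Z. \<forall>g'\<in>thom T Y Z.
            cmp T (madd T g g') f = madd T (cmp T g f) (cmp T g' f)) \<and>
        (\<forall>f\<in>thom T X Y. \<forall>f'\<in>thom T X Y. \<forall>g\<in>thom T Y Z.
            cmp T g (madd T f f') = madd T (cmp T g f) (cmp T g f')))"

definition is_zero_obj :: "('o,'m) tricat \<Rightarrow> 'o \<Rightarrow> bool" where
  "is_zero_obj T Z \<longleftrightarrow> Z \<in> obj T \<and>
     (\<forall>X\<in>obj T. thom T Z X = {mzero T Z X} \<and> thom T X Z = {mzero T X Z})"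

definition is_additive :: "('o,'m) tricat \<Rightarrow> bool" where
  "is_additive T \<longleftrightarrow> is_category T \<and> is_preadditive T \<and> (\<exists>Z. is_zero_obj T Z) \<and>
     (\<forall>X\<in>obj T. \<forall>Y\<in>obj T. \<exists>P\<in>obj T.
        \<exists>p1\<in>thom T P X. \<exists>p2\<in>thom T P Y. \<exists>i1\<in>thom T X P. \<exists>i2\<in>thom T Y P.
          cmp T p1 i1 = idm T X \<and> cmp T p2 i2 = idm T Y \<and>
          cmp T p1 i2 = mzero T Y X \<and> cmp T p2 i1 = mzero T X Y \<and>
          madd T (cmp T i1 p1) (cmp T i2 p2) = idm T P)"

text \<open>The suspension is an additive auto-equivalence.\<close>
definition susp_ok :: "('o,'m) tricat \<Rightarrow> bool" where
  "susp_ok T \<longleftrightarrow>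
     (\<forall>X\<in>obj T. susp T X \<in> obj T \<and> suspm T (idm T X) = idm T (susp T X)) \<and>
     (\<forall>X\<in>obj T. \<forall>Y\<in>obj T.
        bij_betw (suspm T) (thom T X Y) (thom T (susp T X) (susp T Y)) \<and>
        (\<forall>f\<in>thom T X Y. \<forall>f'\<in>thom T X Y. suspm T (madd T f f') = madd T (suspm T f) (suspm T f'))) \<and>
     (\<forall>X\<in>obj T. \<forall>Y\<in>obj T. \<forall>Z\<in>obj T. \<forall>f\<in>thom T X Y. \<forall>g\<in>thom T Y Z.
        suspm T (cmp T g f) = cmp T (suspm T g) (suspm T f)) \<and>
     (\<forall>Y\<in>obj T. \<exists>X\<in>obj T. isomorphic T (susp T X) Y)"

definition is_triangle :: "('o,'m) tricat \<Rightarrow> 'm \<times> 'm \<times> 'm \<Rightarrow> bool" where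
  "is_triangle T t \<longleftrightarrow> (case t of (f,g,h) \<Rightarrow>
     (\<exists>X\<in>obj T. \<exists>Y\<in>obj T. \<exists>Z\<in>obj T.
        f \<in> thom T X Y \<and> g \<in> thom T Y Z \<and> h \<in> thom T Z (susp T X)))"

definition is_triangulated :: "('o,'m) tricat \<Rightarrow> bool" where
  "is_triangulated T \<longleftrightarrow> is_additive T \<and> susp_ok T \<and>
     (\<forall>t\<in>dtri T. is_triangle T t) \<and>
     \<comment> \<open>TR1: closure under isomorphisms of triangles\<close>
     (\<forall>f g h f' g' h' a b c. (f,g,h) \<in> dtri T \<and> is_triangle T (f',g',h') \<and>
        a \<in> thom T (src T f) (src T f') \<and> b \<in> thom T (tgt T f) (tgt T f') \<and>
        c \<in> thom T (tgt T g) (tgt T g') \<and> is_iso T a \<and> is_iso T b \<and> is_iso T c \<and>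
        cmp T f' a = cmp T b f \<and> cmp T g' b = cmp T c g \<and>
        cmp T h' c = cmp T (suspm T a) h
        \<longrightarrow> (f',g',h') \<in> dtri T) \<and>
     \<comment> \<open>TR1: identity triangles\<close>
     (\<forall>X\<in>obj T. \<forall>Z. is_zero_obj T Z \<longrightarrow>
        (idm T X, mzero T X Z, mzero T Z (susp T X)) \<in> dtri T) \<and>
     \<comment> \<open>TR1: every morphism embeds in a distinguished triangle\<close>
     (\<forall>f\<in>mor T. \<exists>g h. (f,g,h) \<in> dtri T) \<and>
     \<comment> \<open>TR2: rotation\<close>
     (\<forall>f g h. is_triangle T (f,g,h) \<longrightarrow>
        ((f,g,h) \<in> dtri T \<longleftrightarrow> (g, h, mneg T (suspm T f)) \<in> dtri T)) \<and>
     \<comment> \<open>TR3: completion of morphisms of triangles\<close>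
     (\<forall>f g h f' g' h' a b. (f,g,h) \<in> dtri T \<and> (f',g',h') \<in> dtri T \<and>
        a \<in> thom T (src T f) (src T f') \<and> b \<in> thom T (tgt T f) (tgt T f') \<and>
        cmp T b f = cmp T f' a
        \<longrightarrow> (\<exists>c\<in>thom T (tgt T g) (tgt T g').
               cmp T c g = cmp T g' b \<and> cmp T h' c = cmp T (suspm T a) h)) \<and>
     \<comment> \<open>TR4: octahedral axiom\<close>
     (\<forall>f u d g v e w k. (f,u,d) \<in> dtri T \<and> (g,v,e) \<in> dtri T \<and>
        (cmp T g f, w, k) \<in> dtri T \<and> tgt T f = src T g
        \<longrightarrow> (\<exists>a\<in>thom T (tgt T u) (tgt T w). \<exists>b\<in>thom T (tgt T w) (tgt T v).
               (a, b, cmp T (suspm T u) e) \<in> dtri T \<and>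
               cmp T a u = cmp T w g \<and> cmp T k a = d \<and>
               cmp T b w = v \<and> cmp T e b = cmp T (suspm T f) k))"

definition right_approx :: "('o,'m) tricat \<Rightarrow> 'o set \<Rightarrow> 'o \<Rightarrow> 'm \<Rightarrow> bool" where
  "right_approx T C X f \<longleftrightarrow> src T f \<in> C \<and> f \<in> thom T (src T f) X \<and>
     (\<forall>C'\<in>C. \<forall>h\<in>thom T C' X. \<exists>k\<in>thom T C' (src T f). cmp T f k = h)"

definition left_approx :: "('o,'m) tricat \<Rightarrow> 'o set \<Rightarrow> 'o \<Rightarrow> 'm \<Rightarrow> bool" where
  "left_approx T C X f \<longleftrightarrow> tgt T f \<in> C \<and> f \<in> thom T X (tgt T f) \<and>
     (\<forall>C'\<in>C. \<forall>h\<in>thom T X C'. \<exists>k\<in>thom T (tgt T f) C'. cmp T k f = h)"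

definition functorially_finite :: "('o,'m) tricat \<Rightarrow> 'o set \<Rightarrow> bool" where
  "functorially_finite T C \<longleftrightarrow> C \<subseteq> obj T \<and>
     (\<forall>X\<in>obj T. \<exists>f. right_approx T C X f) \<and> (\<forall>X\<in>obj T. \<exists>f. left_approx T C X f)"

definition cluster_tilting :: "nat \<Rightarrow> ('o,'m) tricat \<Rightarrow> 'o set \<Rightarrow> bool" where
  "cluster_tilting t T C \<longleftrightarrow> functorially_finite T C \<and>
     C = {A\<in>obj T. \<forall>i. 1 \<le> i \<and> i \<le> t - 1 \<longrightarrow> (\<forall>B\<in>C.
            thom T A ((susp T ^^ i) B) = {mzero T A ((susp T ^^ i) B)})} \<and>
     C = {A\<in>obj T. \<forall>i. 1 \<le> i \<and> i \<le> t - 1 \<longrightarrow> (\<forall>B\<in>C.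
            thom T ((susp T ^^ i) B) A = {mzero T ((susp T ^^ i) B) A})}"

fun dcomp :: "('o,'m) tricat \<Rightarrow> (nat \<Rightarrow> 'm) \<Rightarrow> nat \<Rightarrow> 'm" where
  "dcomp T d 0 = undefined"
| "dcomp T d (Suc 0) = d 1"
| "dcomp T d (Suc (Suc k)) = cmp T ((suspm T ^^ Suc k) (d (Suc (Suc k)))) (dcomp T d (Suc k))"

definition is_n_angle :: "nat \<Rightarrow> ('o,'m) tricat \<Rightarrow> 'o set \<Rightarrow> (nat \<Rightarrow> 'o) \<Rightarrow> (nat \<Rightarrow> 'm) \<Rightarrow> bool" where
  "is_n_angle n T C A \<alpha> \<longleftrightarrow>
     (\<forall>i. 1 \<le> i \<and> i \<le> n \<longrightarrow> A i \<in> C) \<and>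
     (\<forall>i. 1 \<le> i \<and> i \<le> n - 1 \<longrightarrow> \<alpha> i \<in> thom T (A i) (A (i+1))) \<and>
     \<alpha> n \<in> thom T (A n) ((susp T ^^ (n-2)) (A 1)) \<and>
     (\<exists>X f g d.
        (\<forall>i. 1 \<le> i \<and> i \<le> n - 3 \<longrightarrow> X i \<in> obj T \<and>
              f i \<in> thom T (A (i+1)) (X i) \<and> g i \<in> thom T (X i) (A (i+2))) \<and>
        (\<alpha> 1, f 1, d (n-2)) \<in> dtri T \<and>
        (\<forall>i. 2 \<le> i \<and> i \<le> n - 3 \<longrightarrow> (g (i-1), f i, d (n-1-i)) \<in> dtri T) \<and>
        (g (n-3), \<alpha> (n-1), d 1) \<in> dtri T \<and>
        (\<forall>i. 1 \<le> i \<and> i \<le> n - 3 \<longrightarrow> \<alpha> (i+1) = cmp T (g i) (f i)) \<and>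
        \<alpha> n = dcomp T d (n-2))"

text \<open>Free abelian group on the objects of S (finitely supported integer functions).
  Isomorphism classes are obtained by adding the relations <X> - <Y> for X iso Y.\<close>
definition free_ab :: "'o set \<Rightarrow> ('o \<Rightarrow> int) monoid" where
  "free_ab S = \<lparr>carrier = {c. finite {x. c x \<noteq> 0} \<and> (\<forall>x. x \<notin> S \<longrightarrow> c x = 0)},
                mult = (\<lambda>c c' x. c x + c' x), one = (\<lambda>x. 0)\<rparr>"

definition gen :: "'o \<Rightarrow> 'o \<Rightarrow> int" where
  "gen A = (\<lambda>x. if x = A then 1 else 0)"

definition iso_rels :: "('o,'m) tricat \<Rightarrow> 'o set \<Rightarrow> ('o \<Rightarrow> int) set" where
  "iso_rels T S = {(\<lambda>x. gen X x - gen Y x) | X Y. X \<in> S \<and> Y \<in> S \<and> isomorphic T X Y}"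

definition tri_rels :: "('o,'m) tricat \<Rightarrow> ('o \<Rightarrow> int) set" where
  "tri_rels T = {(\<lambda>x. gen (src T f) x - gen (tgt T f) x + gen (tgt T g) x) | f g h. (f,g,h) \<in> dtri T}"

definition K0_tri :: "('o,'m) tricat \<Rightarrow> ('o \<Rightarrow> int) set monoid" where
  "K0_tri T = free_ab (obj T) Mod generate (free_ab (obj T)) (iso_rels T (obj T) \<union> tri_rels T)"

definition angle_rels :: "nat \<Rightarrow> ('o,'m) tricat \<Rightarrow> 'o set \<Rightarrow> ('o \<Rightarrow> int) set" where
  "angle_rels n T C = {(\<lambda>x. \<Sum>i=1..n. (-1)^(i+1) * gen (A i) x) | A \<alpha>. is_n_angle n T C A \<alpha>}
     \<union> (if even n then {gen Z | Z. Z \<in> C \<and> is_zero_obj T Z} else {})"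

definition K0_ang :: "nat \<Rightarrow> ('o,'m) tricat \<Rightarrow> 'o set \<Rightarrow> ('o \<Rightarrow> int) set monoid" where
  "K0_ang n T C = free_ab C Mod generate (free_ab C) (iso_rels T C \<union> angle_rels n T C)"

definition cls_tri :: "('o,'m) tricat \<Rightarrow> 'o \<Rightarrow> ('o \<Rightarrow> int) set" where
  "cls_tri T A = generate (free_ab (obj T)) (iso_rels T (obj T) \<union> tri_rels T) #>\<^bsub>free_ab (obj T)\<^esub> gen A"

definition cls_ang :: "nat \<Rightarrow> ('o,'m) tricat \<Rightarrow> 'o set \<Rightarrow> 'o \<Rightarrow> ('o \<Rightarrow> int) set" where
  "cls_ang n T C A = generate (free_ab C) (iso_rels T C \<union> angle_rels n T C) #>\<^bsub>free_ab C\<^esub> gen A"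

end

theory Submission
  imports Defs
begin


lemma free_ab_carrier: "c \<in> carrier (free_ab S) \<longleftrightarrow> finite {x. c x \<noteq> 0} \<and> (\<forall>x. x \<notin> S \<longrightarrow> c x = 0)"
  by (simp add: free_ab_def)

lemma free_ab_mult[simp]: "a \<otimes>\<^bsub>free_ab S\<^esub> b = (\<lambda>x. a x + b x)"
  by (simp add: free_ab_def)

lemma free_ab_one[simp]: "\<one>\<^bsub>free_ab S\<^esub> = (\<lambda>x. 0)"
  by (simp add: free_ab_def)

lemma free_ab_add_closed:
  assumes "a \<in> carrier (free_ab S)" "b \<in> carrier (free_ab S)"
  shows "(\<lambda>x. a x + b x) \<in> carrier (free_ab S)"
proof -
  have "{x. a x + b x \<noteq> 0} \<subseteq> {x. a x \<noteq> 0} \<union> {x. b x \<noteq> 0}" by auto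
  then show ?thesis using assms unfolding free_ab_carrier by (auto intro: finite_subset)
qed

lemma free_ab_neg_closed:
  assumes "a \<in> carrier (free_ab S)"
  shows "(\<lambda>x. - a x) \<in> carrier (free_ab S)"
  using assms unfolding free_ab_carrier by auto

lemma free_ab_comm_group: "comm_group (free_ab S)"
proof (rule comm_groupI)
  fix x assume "x \<in> carrier (free_ab S)"
  then show "\<exists>y\<in>carrier (free_ab S). y \<otimes>\<^bsub>free_ab S\<^esub> x = \<one>\<^bsub>free_ab S\<^esub>"
    by (intro bexI[of _ "\<lambda>z. - x z"]) (auto intro: free_ab_neg_closed)
qed (simp_all add: free_ab_add_closed, auto simp: free_ab_carrier)

lemma free_ab_group: "group (free_ab S)"
  using free_ab_comm_group comm_group.axioms(2) by blast

lemma free_ab_inv: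
  assumes "c \<in> carrier (free_ab S)"
  shows "inv\<^bsub>free_ab S\<^esub> c = (\<lambda>x. - c x)"
  using group.inv_equality[OF free_ab_group, of S "\<lambda>x. - c x" c] assms free_ab_neg_closed
  by auto

lemma sg_add:
  assumes "subgroup H (free_ab S)" "a \<in> H" "b \<in> H"
  shows "(\<lambda>x. a x + b x) \<in> H"
  using subgroup.m_closed[OF assms(1) assms(2,3)] by simp

lemma sg_neg:
  assumes "subgroup H (free_ab S)" "a \<in> H"
  shows "(\<lambda>x. - a x) \<in> H"
  using subgroup.m_inv_closed[OF assms(1) assms(2)] free_ab_inv[of a S]
    subgroup.subset[OF assms(1)] assms(2) by auto

lemma sg_zero:
  assumes "subgroup H (free_ab S)"
  shows "(\<lambda>x. 0) \<in> H"
  using subgroup.one_closed[OF assms(1)] by simp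

lemma sg_diff:
  assumes "subgroup H (free_ab S)" "a \<in> H" "b \<in> H"
  shows "(\<lambda>x. a x - b x) \<in> H"
  using sg_add[OF assms(1) assms(2) sg_neg[OF assms(1,3)]] by simp

lemma gen_carrier: "A \<in> S \<Longrightarrow> gen A \<in> carrier (free_ab S)"
  unfolding free_ab_carrier gen_def by auto

lemma gen_subgroup:
  assumes "R \<subseteq> carrier (free_ab S)"
  shows "subgroup (generate (free_ab S) R) (free_ab S)"
  using group.generate_is_subgroup[OF free_ab_group assms] .


context
  fixes T :: "('o,'m) tricat"
  assumes TT: "is_triangulated T"
begin

lemma T_cat: "is_category T" and T_pre: "is_preadditive T" and T_susp: "susp_ok T"
  and T_zero: "\<exists>Z. is_zero_obj T Z"
  using TT unfolding is_triangulated_def is_additive_def by auto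

lemma T_dtri_tri: "t \<in> dtri T \<Longrightarrow> is_triangle T t"
proof -
  have "\<forall>t\<in>dtri T. is_triangle T t" using TT unfolding is_triangulated_def by (elim conjE)
  then show "t \<in> dtri T \<Longrightarrow> is_triangle T t" by blast
qed

lemma T_TR1_id: "X \<in> obj T \<Longrightarrow> is_zero_obj T Z \<Longrightarrow> (idm T X, mzero T X Z, mzero T Z (susp T X)) \<in> dtri T"
proof -
  have "\<forall>X\<in>obj T. \<forall>Z. is_zero_obj T Z \<longrightarrow>
        (idm T X, mzero T X Z, mzero T Z (susp T X)) \<in> dtri T" using TT unfolding is_triangulated_def by (elim conjE)
  then show "X \<in> obj T \<Longrightarrow> is_zero_obj T Z \<Longrightarrow> (idm T X, mzero T X Z, mzero T Z (susp T X)) \<in> dtri T" by blast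
qed

lemma T_TR1_emb: "f \<in> mor T \<Longrightarrow> \<exists>g h. (f,g,h) \<in> dtri T"
proof -
  have "\<forall>f\<in>mor T. \<exists>g h. (f,g,h) \<in> dtri T" using TT unfolding is_triangulated_def by (elim conjE)
  then show "f \<in> mor T \<Longrightarrow> \<exists>g h. (f,g,h) \<in> dtri T" by blast
qed

lemma T_TR2: "is_triangle T (f,g,h) \<Longrightarrow> ((f,g,h) \<in> dtri T \<longleftrightarrow> (g, h, mneg T (suspm T f)) \<in> dtri T)"
proof -
  have "\<forall>f g h. is_triangle T (f,g,h) \<longrightarrow>
        ((f,g,h) \<in> dtri T \<longleftrightarrow> (g, h, mneg T (suspm T f)) \<in> dtri T)" using TT unfolding is_triangulated_def by (elim conjE)
  then show "is_triangle T (f,g,h) \<Longrightarrow> ((f,g,h) \<in> dtri T \<longleftrightarrow> (g, h, mneg T (suspm T f)) \<in> dtri T)" by blast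
qed

lemma T_TR3: "(f,g,h) \<in> dtri T \<Longrightarrow> (f',g',h') \<in> dtri T \<Longrightarrow>
        a \<in> thom T (src T f) (src T f') \<Longrightarrow> b \<in> thom T (tgt T f) (tgt T f') \<Longrightarrow>
        cmp T b f = cmp T f' a
        \<Longrightarrow> (\<exists>c\<in>thom T (tgt T g) (tgt T g').
               cmp T c g = cmp T g' b \<and> cmp T h' c = cmp T (suspm T a) h)"
proof -
  have "\<forall>f g h f' g' h' a b. (f,g,h) \<in> dtri T \<and> (f',g',h') \<in> dtri T \<and>
        a \<in> thom T (src T f) (src T f') \<and> b \<in> thom T (tgt T f) (tgt T f') \<and>
        cmp T b f = cmp T f' a
        \<longrightarrow> (\<exists>c\<in>thom T (tgt T g) (tgt T g').
               cmp T c g = cmp T g' b \<and> cmp T h' c = cmp T (suspm T a) h)"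
    using TT unfolding is_triangulated_def by (elim conjE)
  then show "(f,g,h) \<in> dtri T \<Longrightarrow> (f',g',h') \<in> dtri T \<Longrightarrow>
        a \<in> thom T (src T f) (src T f') \<Longrightarrow> b \<in> thom T (tgt T f) (tgt T f') \<Longrightarrow>
        cmp T b f = cmp T f' a
        \<Longrightarrow> (\<exists>c\<in>thom T (tgt T g) (tgt T g').
               cmp T c g = cmp T g' b \<and> cmp T h' c = cmp T (suspm T a) h)" by blast
qed

lemma thomD: "f \<in> thom T X Y \<Longrightarrow> f \<in> mor T \<and> src T f = X \<and> tgt T f = Y"
  by (simp add: thom_def)

lemma thom_obj: "f \<in> thom T X Y \<Longrightarrow> X \<in> obj T \<and> Y \<in> obj T"
  using T_cat unfolding is_category_def thom_def by auto

lemma cmp_thom: "f \<in> thom T X Y \<Longrightarrow> g \<in> thom T Y Z \<Longrightarrow> cmp T g f \<in> thom T X Z"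
  using T_cat thom_obj unfolding is_category_def by blast

lemma idm_thom: "X \<in> obj T \<Longrightarrow> idm T X \<in> thom T X X"
  using T_cat unfolding is_category_def by blast

lemma cmp_assoc: "f \<in> thom T X Y \<Longrightarrow> g \<in> thom T Y Z \<Longrightarrow> h \<in> thom T Z W \<Longrightarrow>
   cmp T h (cmp T g f) = cmp T (cmp T h g) f"
  using T_cat unfolding is_category_def thom_def by auto

lemma cmp_idl: "f \<in> thom T X Y \<Longrightarrow> cmp T (idm T Y) f = f"
  using T_cat unfolding is_category_def thom_def by auto

lemma cmp_idr: "f \<in> thom T X Y \<Longrightarrow> cmp T f (idm T X) = f"
  using T_cat unfolding is_category_def thom_def by auto

lemma zero_thom: "X \<in> obj T \<Longrightarrow> Y \<in> obj T \<Longrightarrow> mzero T X Y \<in> thom T X Y"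
  using T_pre unfolding is_preadditive_def by blast

lemma mneg_thom: "f \<in> thom T X Y \<Longrightarrow> mneg T f \<in> thom T X Y"
  using T_pre thom_obj unfolding is_preadditive_def by blast

lemma madd_thom: "f \<in> thom T X Y \<Longrightarrow> g \<in> thom T X Y \<Longrightarrow> madd T f g \<in> thom T X Y"
  using T_pre thom_obj unfolding is_preadditive_def by blast

lemma madd_zero: "f \<in> thom T X Y \<Longrightarrow> madd T f (mzero T X Y) = f"
  using T_pre thom_obj unfolding is_preadditive_def by blast

lemma madd_neg: "f \<in> thom T X Y \<Longrightarrow> madd T f (mneg T f) = mzero T X Y"
  using T_pre thom_obj unfolding is_preadditive_def by blast

lemma madd_assoc: "f \<in> thom T X Y \<Longrightarrow> g \<in> thom T X Y \<Longrightarrow> h \<in> thom T X Y \<Longrightarrow>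
   madd T (madd T f g) h = madd T f (madd T g h)"
  using T_pre thom_obj unfolding is_preadditive_def by blast

lemma distr_l: "f \<in> thom T X Y \<Longrightarrow> g \<in> thom T Y Z \<Longrightarrow> g' \<in> thom T Y Z \<Longrightarrow>
   cmp T (madd T g g') f = madd T (cmp T g f) (cmp T g' f)"
  using T_pre thom_obj unfolding is_preadditive_def by blast

lemma distr_r: "f \<in> thom T X Y \<Longrightarrow> f' \<in> thom T X Y \<Longrightarrow> g \<in> thom T Y Z \<Longrightarrow>
   cmp T g (madd T f f') = madd T (cmp T g f) (cmp T g f')"
  using T_pre thom_obj unfolding is_preadditive_def by blast

lemma cancel_zero:
  assumes "p \<in> thom T X Y" "madd T p p = p"
  shows "p = mzero T X Y"
proof -
  have "madd T (madd T p p) (mneg T p) = mzero T X Y"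
    using assms madd_neg by simp
  moreover have "madd T (madd T p p) (mneg T p) = p"
    using madd_assoc[OF assms(1) assms(1) mneg_thom[OF assms(1)]] madd_neg[OF assms(1)]
      madd_zero[OF assms(1)] by simp
  ultimately show ?thesis by simp
qed

lemma zero_cmp_l:
  assumes "f \<in> thom T X Y" "Z \<in> obj T"
  shows "cmp T (mzero T Y Z) f = mzero T X Z"
proof -
  have Y: "Y \<in> obj T" "X \<in> obj T" using thom_obj assms by auto
  have z: "mzero T Y Z \<in> thom T Y Z" using zero_thom Y assms by auto
  have "cmp T (madd T (mzero T Y Z) (mzero T Y Z)) f = madd T (cmp T (mzero T Y Z) f) (cmp T (mzero T Y Z) f)"
    using distr_l[OF assms(1) z z] .
  then have "madd T (cmp T (mzero T Y Z) f) (cmp T (mzero T Y Z) f) = cmp T (mzero T Y Z) f"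
    using madd_zero[OF z] by simp
  then show ?thesis using cancel_zero cmp_thom[OF assms(1) z] by blast
qed

lemma zero_cmp_r:
  assumes "g \<in> thom T Y Z" "X \<in> obj T"
  shows "cmp T g (mzero T X Y) = mzero T X Z"
proof -
  have Y: "Y \<in> obj T" "Z \<in> obj T" using thom_obj assms by auto
  have z: "mzero T X Y \<in> thom T X Y" using zero_thom Y assms by auto
  have "cmp T g (madd T (mzero T X Y) (mzero T X Y)) = madd T (cmp T g (mzero T X Y)) (cmp T g (mzero T X Y))"
    using distr_r[OF z z assms(1)] .
  then have "madd T (cmp T g (mzero T X Y)) (cmp T g (mzero T X Y)) = cmp T g (mzero T X Y)"
    using madd_zero[OF z] by simp
  then show ?thesis using cancel_zero cmp_thom[OF z assms(1)] by blast
qed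

lemma susp_obj: "X \<in> obj T \<Longrightarrow> susp T X \<in> obj T"
  using T_susp unfolding susp_ok_def by blast

lemma suspm_thom: "f \<in> thom T X Y \<Longrightarrow> suspm T f \<in> thom T (susp T X) (susp T Y)"
  using T_susp thom_obj unfolding susp_ok_def bij_betw_def by blast

lemma suspm_bij: "X \<in> obj T \<Longrightarrow> Y \<in> obj T \<Longrightarrow> bij_betw (suspm T) (thom T X Y) (thom T (susp T X) (susp T Y))"
  using T_susp unfolding susp_ok_def by blast

lemma suspm_add: "f \<in> thom T X Y \<Longrightarrow> f' \<in> thom T X Y \<Longrightarrow> suspm T (madd T f f') = madd T (suspm T f) (suspm T f')"
  using T_susp thom_obj unfolding susp_ok_def by blast

lemma suspm_cmp: "f \<in> thom T X Y \<Longrightarrow> g \<in> thom T Y Z \<Longrightarrow> suspm T (cmp T g f) = cmp T (suspm T g) (suspm T f)"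
  using T_susp thom_obj unfolding susp_ok_def by blast

lemma susp_ess: "Y \<in> obj T \<Longrightarrow> \<exists>X\<in>obj T. isomorphic T (susp T X) Y"
  using T_susp unfolding susp_ok_def by blast

lemma suspm_zero:
  assumes "X \<in> obj T" "Y \<in> obj T"
  shows "suspm T (mzero T X Y) = mzero T (susp T X) (susp T Y)"
proof -
  have z: "mzero T X Y \<in> thom T X Y" using zero_thom assms by auto
  have "suspm T (madd T (mzero T X Y) (mzero T X Y)) = madd T (suspm T (mzero T X Y)) (suspm T (mzero T X Y))"
    using suspm_add[OF z z] .
  then show ?thesis using madd_zero[OF z] cancel_zero suspm_thom[OF z] by simp
qed

lemma suspn_obj: "B \<in> obj T \<Longrightarrow> (susp T ^^ i) B \<in> obj T"
  by (induction i) (auto simp: susp_obj)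

end

context
  fixes T :: "('o,'m) tricat"
  assumes TT: "is_triangulated T"
begin

lemma tri_types:
  assumes "(f,g,h) \<in> dtri T"
  shows "f \<in> thom T (src T f) (tgt T f) \<and> g \<in> thom T (tgt T f) (tgt T g) \<and>
         h \<in> thom T (tgt T g) (susp T (src T f))"
proof -
  from T_dtri_tri[OF TT assms] obtain X Y Z where
    "f \<in> thom T X Y" "g \<in> thom T Y Z" "h \<in> thom T Z (susp T X)"
    unfolding is_triangle_def by auto
  then show ?thesis by (simp add: thom_def)
qed

lemma rot:
  assumes "(f,g,h) \<in> dtri T"
  shows "(g,h,mneg T (suspm T f)) \<in> dtri T"
  using T_TR2[OF TT T_dtri_tri[OF TT assms]] assms by blast

lemma zobj_thom1: "is_zero_obj T Z \<Longrightarrow> p \<in> thom T Z X \<Longrightarrow> p = mzero T Z X"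
  unfolding is_zero_obj_def using thom_obj[OF TT] by blast

lemma zobj_thom2: "is_zero_obj T Z \<Longrightarrow> p \<in> thom T X Z \<Longrightarrow> p = mzero T X Z"
  unfolding is_zero_obj_def using thom_obj[OF TT] by blast

lemma zobj_obj: "is_zero_obj T Z \<Longrightarrow> Z \<in> obj T"
  unfolding is_zero_obj_def by blast

lemma comp_zero:
  assumes "(f,g,h) \<in> dtri T"
  shows "cmp T g f = mzero T (src T f) (tgt T g)"
proof -
  obtain Z0 where Z0: "is_zero_obj T Z0" using T_zero[OF TT] by blast
  have ty: "f \<in> thom T (src T f) (tgt T f)" "g \<in> thom T (tgt T f) (tgt T g)"
    using tri_types[OF assms] by auto
  let ?X = "src T f"
  have X: "?X \<in> obj T" using thom_obj[OF TT ty(1)] by blast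
  have Zo: "tgt T g \<in> obj T" using thom_obj[OF TT ty(2)] by blast
  have t0: "(idm T ?X, mzero T ?X Z0, mzero T Z0 (susp T ?X)) \<in> dtri T"
    using T_TR1_id[OF TT X Z0] .
  have id: "idm T ?X \<in> thom T ?X ?X" using idm_thom[OF TT X] .
  have zt: "mzero T ?X Z0 \<in> thom T ?X Z0" using zero_thom[OF TT X zobj_obj[OF Z0]] .
  have "\<exists>c\<in>thom T (tgt T (mzero T ?X Z0)) (tgt T g).
               cmp T c (mzero T ?X Z0) = cmp T g f \<and> cmp T h c = cmp T (suspm T (idm T ?X)) (mzero T Z0 (susp T ?X))"
    apply (rule T_TR3[OF TT t0 assms])
    using id ty thomD[OF TT id] by auto
  then obtain c where c: "c \<in> thom T Z0 (tgt T g)" "cmp T c (mzero T ?X Z0) = cmp T g f"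
    using thomD[OF TT zt] by auto
  have "c = mzero T Z0 (tgt T g)" using zobj_thom1[OF Z0 c(1)] .
  then show ?thesis using c(2) zero_cmp_l[OF TT zt Zo] by simp
qed

lemma iso_zero:
  assumes Z0: "is_zero_obj T Z0" and psi: "\<psi> \<in> thom T W Z0" "is_iso T \<psi>"
  shows "is_zero_obj T W"
proof -
  obtain \<psi>' where p': "\<psi>' \<in> thom T Z0 W" "cmp T \<psi>' \<psi> = idm T W"
    using psi thomD[OF TT psi(1)] unfolding is_iso_def by auto
  have W: "W \<in> obj T" using thom_obj[OF TT psi(1)] by blast
  have Zo: "Z0 \<in> obj T" using zobj_obj[OF Z0] .
  have A: "p = mzero T W X" if "p \<in> thom T W X" for p X
  proof -
    have X: "X \<in> obj T" using thom_obj[OF TT that] by blast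
    have e1: "\<And>q. q \<in> thom T W X \<Longrightarrow> q = cmp T (mzero T Z0 X) \<psi>"
    proof -
      fix q assume q: "q \<in> thom T W X"
      have "q = cmp T q (cmp T \<psi>' \<psi>)" using p'(2) cmp_idr[OF TT q] by simp
      also have "\<dots> = cmp T (cmp T q \<psi>') \<psi>" using cmp_assoc[OF TT psi(1) p'(1) q] .
      also have "cmp T q \<psi>' = mzero T Z0 X" using zobj_thom1[OF Z0 cmp_thom[OF TT p'(1) q]] .
      finally show "q = cmp T (mzero T Z0 X) \<psi>" .
    qed
    show ?thesis using e1[OF that] e1[OF zero_thom[OF TT W X]] by simp
  qed
  have B: "p = mzero T X W" if "p \<in> thom T X W" for p X
  proof -
    have X: "X \<in> obj T" using thom_obj[OF TT that] by blast
    have e1: "\<And>q. q \<in> thom T X W \<Longrightarrow> q = cmp T \<psi>' (mzero T X Z0)"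
    proof -
      fix q assume q: "q \<in> thom T X W"
      have "q = cmp T (cmp T \<psi>' \<psi>) q" using p'(2) cmp_idl[OF TT q] by simp
      also have "\<dots> = cmp T \<psi>' (cmp T \<psi> q)" using cmp_assoc[OF TT q psi(1) p'(1)] by simp
      also have "cmp T \<psi> q = mzero T X Z0" using zobj_thom2[OF Z0 cmp_thom[OF TT q psi(1)]] .
      finally show "q = cmp T \<psi>' (mzero T X Z0)" .
    qed
    show ?thesis using e1[OF that] e1[OF zero_thom[OF TT X W]] by simp
  qed
  show ?thesis unfolding is_zero_obj_def
    using W A B zero_thom[OF TT] by blast
qed

lemma susp_zero_exists: "\<exists>V\<in>obj T. is_zero_obj T (susp T V)"
proof -
  obtain Z0 where Z0: "is_zero_obj T Z0" using T_zero[OF TT] by blast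
  obtain V where V: "V \<in> obj T" "isomorphic T (susp T V) Z0"
    using susp_ess[OF TT zobj_obj[OF Z0]] by blast
  then obtain \<psi> where "\<psi> \<in> thom T (susp T V) Z0" "is_iso T \<psi>" unfolding isomorphic_def by blast
  then show ?thesis using iso_zero[OF Z0] V(1) by blast
qed

lemma exact_mid:
  assumes tri: "(f,g,h) \<in> dtri T" and u: "u \<in> thom T (tgt T f) W"
    and uf: "cmp T u f = mzero T (src T f) W"
  shows "\<exists>c\<in>thom T (tgt T g) W. cmp T c g = u"
proof -
  obtain V where V: "V \<in> obj T" "is_zero_obj T (susp T V)" using susp_zero_exists by blast
  have W: "W \<in> obj T" using thom_obj[OF TT u] by blast
  have ty: "f \<in> thom T (src T f) (tgt T f)" using tri_types[OF tri] by auto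
  have X: "src T f \<in> obj T" using thom_obj[OF TT ty] by blast
  have zVW: "mzero T V W \<in> thom T V W" using zero_thom[OF TT V(1) W] .
  have idW: "idm T W \<in> thom T W W" using idm_thom[OF TT W] .
  have zW: "mzero T W (susp T V) \<in> thom T W (susp T V)" using zero_thom[OF TT W susp_obj[OF TT V(1)]] .
  have istri: "is_triangle T (mzero T V W, idm T W, mzero T W (susp T V))"
    unfolding is_triangle_def using V(1) W zVW idW zW by blast
  have sz: "suspm T (mzero T V W) = mzero T (susp T V) (susp T W)" using suspm_zero[OF TT V(1) W] .
  have "mneg T (suspm T (mzero T V W)) \<in> thom T (susp T V) (susp T W)"
    using mneg_thom[OF TT suspm_thom[OF TT zVW]] .
  then have mz: "mneg T (suspm T (mzero T V W)) = mzero T (susp T V) (susp T W)"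
    using zobj_thom1[OF V(2)] by blast
  have "(idm T W, mzero T W (susp T V), mzero T (susp T V) (susp T W)) \<in> dtri T"
    using T_TR1_id[OF TT W V(2)] .
  then have tW: "(mzero T V W, idm T W, mzero T W (susp T V)) \<in> dtri T"
    using T_TR2[OF TT istri] mz by simp
  have zXV: "mzero T (src T f) V \<in> thom T (src T f) V" using zero_thom[OF TT X V(1)] .
  have "\<exists>c\<in>thom T (tgt T g) (tgt T (idm T W)).
               cmp T c g = cmp T (idm T W) u \<and> cmp T (mzero T W (susp T V)) c = cmp T (suspm T (mzero T (src T f) V)) h"
    apply (rule T_TR3[OF TT tri tW])
    using zXV u thomD[OF TT zVW] uf zero_cmp_l[OF TT zXV W] by auto
  then show ?thesis using thomD[OF TT idW] cmp_idl[OF TT u] by auto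
qed

end

definition Vset :: "('o,'m) tricat \<Rightarrow> 'o set \<Rightarrow> nat \<Rightarrow> 'o \<Rightarrow> bool" where
  "Vset T C m X \<longleftrightarrow> (\<forall>B\<in>C. \<forall>i. 1 \<le> i \<and> i \<le> m \<longrightarrow>
      thom T X ((susp T ^^ i) B) = {mzero T X ((susp T ^^ i) B)})"

context
  fixes T :: "('o,'m) tricat" and C :: "'o set" and t :: nat
  assumes TT: "is_triangulated T" and ct: "cluster_tilting t T C"
begin

lemma C_sub: "C \<subseteq> obj T"
  using ct unfolding cluster_tilting_def functorially_finite_def by blast

lemma C_left: "X \<in> obj T \<Longrightarrow> \<exists>f. left_approx T C X f"
  using ct unfolding cluster_tilting_def functorially_finite_def by blast

lemma C_van: "A \<in> C \<Longrightarrow> B \<in> C \<Longrightarrow> 1 \<le> i \<Longrightarrow> i \<le> t - 1 \<Longrightarrow>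
   thom T A ((susp T ^^ i) B) = {mzero T A ((susp T ^^ i) B)}"
proof -
  assume a: "A \<in> C" "B \<in> C" "1 \<le> i" "i \<le> t - 1"
  have "C = {A\<in>obj T. \<forall>i. 1 \<le> i \<and> i \<le> t - 1 \<longrightarrow> (\<forall>B\<in>C.
            thom T A ((susp T ^^ i) B) = {mzero T A ((susp T ^^ i) B)})}"
    using ct unfolding cluster_tilting_def by blast
  then have "A \<in> {A\<in>obj T. \<forall>i. 1 \<le> i \<and> i \<le> t - 1 \<longrightarrow> (\<forall>B\<in>C.
            thom T A ((susp T ^^ i) B) = {mzero T A ((susp T ^^ i) B)})}" using a(1) by simp
  then show ?thesis using a by blast
qed

lemma C_mem: "X \<in> obj T \<Longrightarrow> Vset T C (t - 1) X \<Longrightarrow> X \<in> C"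
proof -
  assume a: "X \<in> obj T" "Vset T C (t - 1) X"
  have "C = {A\<in>obj T. \<forall>i. 1 \<le> i \<and> i \<le> t - 1 \<longrightarrow> (\<forall>B\<in>C.
            thom T A ((susp T ^^ i) B) = {mzero T A ((susp T ^^ i) B)})}"
    using ct unfolding cluster_tilting_def by blast
  moreover have "X \<in> {A\<in>obj T. \<forall>i. 1 \<le> i \<and> i \<le> t - 1 \<longrightarrow> (\<forall>B\<in>C.
            thom T A ((susp T ^^ i) B) = {mzero T A ((susp T ^^ i) B)})}"
    using a unfolding Vset_def by blast
  ultimately show ?thesis by simp
qed

lemma neg_cmp_zero:
  assumes a: "a \<in> thom T Y Z" and h: "h \<in> thom T X Y" and z: "cmp T (mneg T a) h = mzero T X Z"
  shows "cmp T a h = mzero T X Z"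
proof -
  have na: "mneg T a \<in> thom T Y Z" using mneg_thom[OF TT a] .
  have X: "X \<in> obj T" using thom_obj[OF TT h] by blast
  have Z: "Z \<in> obj T" using thom_obj[OF TT a] by blast
  have "cmp T (madd T a (mneg T a)) h = madd T (cmp T a h) (cmp T (mneg T a) h)"
    using distr_l[OF TT h a na] .
  also have "\<dots> = cmp T a h" using z madd_zero[OF TT cmp_thom[OF TT h a]] by simp
  finally have "cmp T a h = cmp T (madd T a (mneg T a)) h" by simp
  also have "\<dots> = cmp T (mzero T Y Z) h" using madd_neg[OF TT a] by simp
  also have "\<dots> = mzero T X Z" using zero_cmp_l[OF TT h Z] .
  finally show ?thesis .
qed

lemma resolution_step:
  assumes X: "X \<in> obj T"
  shows "\<exists>C0\<in>C. \<exists>X1\<in>obj T. (\<lambda>x. gen X x - gen C0 x + gen X1 x) \<in> tri_rels T \<and>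
     (\<forall>B\<in>C. \<forall>i. 1 \<le> i \<and> i \<le> t - 1 \<and>
        (2 \<le> i \<longrightarrow> thom T X ((susp T ^^ (i-1)) B) = {mzero T X ((susp T ^^ (i-1)) B)})
        \<longrightarrow> thom T X1 ((susp T ^^ i) B) = {mzero T X1 ((susp T ^^ i) B)})"
proof -
  obtain f where la: "left_approx T C X f" using C_left[OF X] by blast
  let ?C0 = "tgt T f"
  have C0: "?C0 \<in> C" and f: "f \<in> thom T X ?C0" using la unfolding left_approx_def by auto
  have "f \<in> mor T" using f thomD[OF TT] by blast
  then obtain g h where tri: "(f,g,h) \<in> dtri T" using T_TR1_emb[OF TT] by blast
  let ?X1 = "tgt T g"
  have sf: "src T f = X" using thomD[OF TT f] by blast
  have g: "g \<in> thom T ?C0 ?X1" and h: "h \<in> thom T ?X1 (susp T X)"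
    using tri_types[OF TT tri] sf by auto
  have X1: "?X1 \<in> obj T" using thom_obj[OF TT g] by blast
  have C0o: "?C0 \<in> obj T" using thom_obj[OF TT g] by blast
  have rel: "(\<lambda>x. gen X x - gen ?C0 x + gen ?X1 x) \<in> tri_rels T"
    unfolding tri_rels_def using tri sf by blast
  have tri2: "(g, h, mneg T (suspm T f)) \<in> dtri T" using rot[OF TT tri] .
  have tri3: "(h, mneg T (suspm T f), mneg T (suspm T g)) \<in> dtri T" using rot[OF TT tri2] .
  have sfm: "suspm T f \<in> thom T (susp T X) (susp T ?C0)" using suspm_thom[OF TT f] .
  have nsf: "mneg T (suspm T f) \<in> thom T (susp T X) (susp T ?C0)" using mneg_thom[OF TT sfm] .
  have "cmp T (mneg T (suspm T f)) h = mzero T (src T h) (tgt T (mneg T (suspm T f)))"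
    using comp_zero[OF TT tri3] .
  then have "cmp T (mneg T (suspm T f)) h = mzero T ?X1 (susp T ?C0)"
    using thomD[OF TT h] thomD[OF TT nsf] by simp
  then have sfh: "cmp T (suspm T f) h = mzero T ?X1 (susp T ?C0)"
    using neg_cmp_zero[OF sfm h] by blast
  have van: "thom T ?X1 ((susp T ^^ i) B) = {mzero T ?X1 ((susp T ^^ i) B)}"
    if B: "B \<in> C" and i: "1 \<le> i" "i \<le> t - 1"
      and hyp: "2 \<le> i \<longrightarrow> thom T X ((susp T ^^ (i-1)) B) = {mzero T X ((susp T ^^ (i-1)) B)}"
    for B i
  proof -
    obtain j where ij: "i = Suc j" using i(1) by (cases i) auto
    have Bo: "B \<in> obj T" using B C_sub by blast
    let ?W' = "(susp T ^^ j) B"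
    have W'o: "?W' \<in> obj T" using suspn_obj[OF TT Bo] .
    have Weq: "(susp T ^^ i) B = susp T ?W'" using ij by simp
    have Wo: "susp T ?W' \<in> obj T" using susp_obj[OF TT W'o] .
    have all: "v = mzero T ?X1 (susp T ?W')" if v: "v \<in> thom T ?X1 (susp T ?W')" for v
    proof -
      have "cmp T v g \<in> thom T ?C0 (susp T ?W')" using cmp_thom[OF TT g v] .
      moreover have "thom T ?C0 (susp T ?W') = {mzero T ?C0 (susp T ?W')}"
        using C_van[OF C0 B i] Weq by simp
      ultimately have vg: "cmp T v g = mzero T (src T g) (susp T ?W')"
        using thomD[OF TT g] by simp
      have "v \<in> thom T (tgt T g) (susp T ?W')" using v .
      from exact_mid[OF TT tri2 this vg] obtain c where
        c: "c \<in> thom T (tgt T h) (susp T ?W')" "cmp T c h = v" by blast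
      have c1: "c \<in> thom T (susp T X) (susp T ?W')" using c(1) thomD[OF TT h] by simp
      have "c \<in> suspm T ` thom T X ?W'"
        using suspm_bij[OF TT X W'o] c1 unfolding bij_betw_def by simp
      then obtain c' where c': "c' \<in> thom T X ?W'" "c = suspm T c'" by blast
      show ?thesis
      proof (cases "2 \<le> i")
        case True
        then have "c' = mzero T X ?W'" using hyp c'(1) ij by auto
        then have "c = mzero T (susp T X) (susp T ?W')" using c'(2) suspm_zero[OF TT X W'o] by simp
        then show ?thesis using c(2) zero_cmp_l[OF TT h Wo] by simp
      next
        case False
        then have j0: "j = 0" using ij by simp
        then have "c' \<in> thom T X B" using c'(1) by simp
        then obtain k where k: "k \<in> thom T ?C0 B" "cmp T k f = c'"
          using la B unfolding left_approx_def by blast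
        have "c = cmp T (suspm T k) (suspm T f)" using c'(2) k suspm_cmp[OF TT f k(1)] by simp
        then have "v = cmp T (cmp T (suspm T k) (suspm T f)) h" using c(2) by simp
        also have "\<dots> = cmp T (suspm T k) (cmp T (suspm T f) h)"
          using cmp_assoc[OF TT h sfm suspm_thom[OF TT k(1)]] by simp
        also have "\<dots> = mzero T ?X1 (susp T B)"
          using sfh zero_cmp_r[OF TT suspm_thom[OF TT k(1)] X1] by simp
        finally show ?thesis using j0 by simp
      qed
    qed
    have "thom T ?X1 (susp T ?W') = {mzero T ?X1 (susp T ?W')}"
      using all zero_thom[OF TT X1 Wo] by blast
    then show ?thesis using Weq by simp
  qed
  show ?thesis
    apply (rule bexI[OF _ C0], rule bexI[OF _ X1])
    using rel van by blast
qed

end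

lemma comb3_carrier:
  assumes "a \<in> S" "b \<in> S" "c \<in> S"
  shows "(\<lambda>x. gen a x - gen b x + gen c x) \<in> carrier (free_ab S)"
proof -
  have "{x. gen a x - gen b x + gen c x \<noteq> 0} \<subseteq> {a,b,c}" by (auto simp: gen_def)
  then show ?thesis using assms unfolding free_ab_carrier by (auto intro: finite_subset simp: gen_def)
qed

lemma iso_rels_carrier: "iso_rels T S \<subseteq> carrier (free_ab S)"
proof
  fix r assume "r \<in> iso_rels T S"
  then obtain X Y where r: "r = (\<lambda>x. gen X x - gen Y x)" "X \<in> S" "Y \<in> S"
    unfolding iso_rels_def by blast
  have "{x. gen X x - gen Y x \<noteq> 0} \<subseteq> {X,Y}" by (auto simp: gen_def)
  then show "r \<in> carrier (free_ab S)" using r unfolding free_ab_carrier by (auto intro: finite_subset simp: gen_def)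
qed

lemma tri_rels_carrier: "is_triangulated T \<Longrightarrow> tri_rels T \<subseteq> carrier (free_ab (obj T))"
proof
  fix r assume TT: "is_triangulated T" and "r \<in> tri_rels T"
  then obtain f g h where r: "r = (\<lambda>x. gen (src T f) x - gen (tgt T f) x + gen (tgt T g) x)" "(f,g,h) \<in> dtri T"
    unfolding tri_rels_def by blast
  have "f \<in> thom T (src T f) (tgt T f)" "g \<in> thom T (tgt T f) (tgt T g)"
    using tri_types[OF TT r(2)] by auto
  then have "src T f \<in> obj T" "tgt T f \<in> obj T" "tgt T g \<in> obj T" using thom_obj[OF TT] by blast+
  then show "r \<in> carrier (free_ab (obj T))" using r(1) comb3_carrier by simp
qed

lemma angle_rels_carrier: "angle_rels n T C \<subseteq> carrier (free_ab C)"
proof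
  fix r assume "r \<in> angle_rels n T C"
  then consider (a) A \<alpha> where "r = (\<lambda>x. \<Sum>i=1..n. (-1)^(i+1) * gen (A i) x)" "is_n_angle n T C A \<alpha>"
    | (z) Z where "r = gen Z" "Z \<in> C"
    unfolding angle_rels_def by (auto split: if_splits)
  then show "r \<in> carrier (free_ab C)"
  proof cases
    case a
    have AC: "\<forall>i. 1 \<le> i \<and> i \<le> n \<longrightarrow> A i \<in> C" using a(2) unfolding is_n_angle_def by blast
    have sub: "{x. r x \<noteq> 0} \<subseteq> A ` {1..n}"
    proof
      fix x assume "x \<in> {x. r x \<noteq> 0}"
      then have "(\<Sum>i=1..n. (-1)^(i+1) * gen (A i) x) \<noteq> (0::int)" using a(1) by simp
      then obtain i where "i \<in> {1..n}" "(-1)^(i+1) * gen (A i) x \<noteq> (0::int)"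
        using sum.neutral by (metis (no_types, lifting))
      then show "x \<in> A ` {1..n}" by (auto simp: gen_def split: if_splits)
    qed
    have "\<forall>x. x \<notin> C \<longrightarrow> r x = 0"
    proof (intro allI impI)
      fix x assume "x \<notin> C"
      then have "x \<notin> A ` {1..n}" using AC by auto
      then show "r x = 0" using sub by blast
    qed
    then show ?thesis unfolding free_ab_carrier using sub finite_subset by blast
  next
    case z then show ?thesis using gen_carrier by simp
  qed
qed

lemma sg_sign:
  assumes "subgroup H (free_ab S)" "a \<in> H"
  shows "(\<lambda>x. (-1)^k * a x) \<in> H"
proof (cases "even k")
  case True then show ?thesis using assms by simp
next
  case False then show ?thesis using sg_neg[OF assms] by simp
qed

lemma telescope:
  assumes sg: "subgroup H (free_ab S)" and n: "n \<ge> 4"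
   and r1: "(\<lambda>x. gen (A 1) x - gen (A 2) x + gen (X 1) x) \<in> H"
   and rm: "\<forall>i. 2 \<le> i \<and> i \<le> n-3 \<longrightarrow> (\<lambda>x. gen (X (i-1)) x - gen (A (i+1)) x + gen (X i) x) \<in> H"
   and rl: "(\<lambda>x. gen (X (n-3)) x - gen (A (n-1)) x + gen (A n) x) \<in> H"
  shows "(\<lambda>x. \<Sum>i=1..n. (-1)^(i+1) * gen (A i) x) \<in> H"
proof -
  obtain m where m: "n = m + 4" using n by (metis add.commute le_Suc_ex)
  let ?P = "\<lambda>k. (\<lambda>x. (\<Sum>i=1..k+1. (-1)^(i+1) * gen (A i) x) + (-1)^(k+1) * gen (X k) x)"
  have P: "1 \<le> k \<longrightarrow> k \<le> n - 3 \<longrightarrow> ?P k \<in> H" for k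
  proof (induction k)
    case 0 then show ?case by simp
  next
    case (Suc k)
    show ?case
    proof (cases "k = 0")
      case True
      have "?P (Suc k) = (\<lambda>x. gen (A 1) x - gen (A 2) x + gen (X 1) x)"
        using True by (simp add: numeral_2_eq_2)
      then show ?thesis using r1 by simp
    next
      case False
      show ?thesis
      proof (intro impI)
        assume k: "Suc k \<le> n - 3"
        then have Pk: "?P k \<in> H" using Suc False by simp
        have "(\<lambda>x. gen (X (Suc k - 1)) x - gen (A (Suc k + 1)) x + gen (X (Suc k)) x) \<in> H"
          using rm[rule_format, of "Suc k"] k False by simp
        then have r: "(\<lambda>x. (-1)^k * (gen (X k) x - gen (A (k+2)) x + gen (X (Suc k)) x)) \<in> H"
          using sg_sign[OF sg] by simp
        have "(\<lambda>x. ?P k x + (-1)^k * (gen (X k) x - gen (A (k+2)) x + gen (X (Suc k)) x)) \<in> H"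
          using sg_add[OF sg Pk r] by simp
        moreover have "(\<lambda>x. ?P k x + (-1)^k * (gen (X k) x - gen (A (k+2)) x + gen (X (Suc k)) x)) = ?P (Suc k)"
          by (rule ext) (simp add: algebra_simps)
        ultimately show "?P (Suc k) \<in> H" by simp
      qed
    qed
  qed
  have Pl: "?P (m+1) \<in> H" using P[of "m+1"] m by simp
  have rl': "(\<lambda>x. (-1)^(m+3) * (gen (X (m+1)) x - gen (A (m+3)) x + gen (A (m+4)) x)) \<in> H"
    using sg_sign[OF sg rl, of "m+3"] m by (simp add: numeral_eq_Suc del: power_Suc)
  have "(\<lambda>x. ?P (m+1) x + (-1)^(m+3) * (gen (X (m+1)) x - gen (A (m+3)) x + gen (A (m+4)) x)) \<in> H"
    using sg_add[OF sg Pl rl'] by simp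
  moreover have "(\<lambda>x. ?P (m+1) x + (-1)^(m+3) * (gen (X (m+1)) x - gen (A (m+3)) x + gen (A (m+4)) x))
     = (\<lambda>x. \<Sum>i=1..n. (-1)^(i+1) * gen (A i) x)"
    by (rule ext) (simp add: m numeral_eq_Suc algebra_simps)
  ultimately show ?thesis by simp
qed


lemma tri_in:
  assumes "(f,g,h) \<in> dtri T" "src T f = a" "tgt T f = b" "tgt T g = c"
  shows "(\<lambda>x. gen a x - gen b x + gen c x) \<in> generate (free_ab (obj T)) (iso_rels T (obj T) \<union> tri_rels T)"
proof -
  have "(\<lambda>x. gen a x - gen b x + gen c x) \<in> tri_rels T"
    unfolding tri_rels_def using assms by blast
  then show ?thesis by (blast intro: generate.incl)
qed

lemma RC_in_HT:
  assumes TT: "is_triangulated T" and n: "n \<ge> 4" and Csub: "C \<subseteq> obj T"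
    and r: "r \<in> iso_rels T C \<union> angle_rels n T C"
  shows "r \<in> generate (free_ab (obj T)) (iso_rels T (obj T) \<union> tri_rels T)"
proof -
  let ?HT = "generate (free_ab (obj T)) (iso_rels T (obj T) \<union> tri_rels T)"
  have sg: "subgroup ?HT (free_ab (obj T))"
    using gen_subgroup iso_rels_carrier tri_rels_carrier[OF TT] by (metis Un_subset_iff)
  consider (i) "r \<in> iso_rels T C" | (a) A \<alpha> where "r = (\<lambda>x. \<Sum>i=1..n. (-1)^(i+1) * gen (A i) x)" "is_n_angle n T C A \<alpha>"
    | (z) Z where "r = gen Z" "Z \<in> C" "is_zero_obj T Z"
    using r unfolding angle_rels_def by (auto split: if_splits)
  then show ?thesis
  proof cases
    case i
    then have "r \<in> iso_rels T (obj T)" using Csub unfolding iso_rels_def by blast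
    then show ?thesis by (blast intro: generate.incl)
  next
    case z
    have Zo: "Z \<in> obj T" using z(3) unfolding is_zero_obj_def by blast
    have t: "(idm T Z, mzero T Z Z, mzero T Z (susp T Z)) \<in> dtri T" using T_TR1_id[OF TT Zo z(3)] .
    have "idm T Z \<in> thom T Z Z" "mzero T Z Z \<in> thom T Z Z" using idm_thom[OF TT Zo] zero_thom[OF TT Zo Zo] by auto
    then have "(\<lambda>x. gen Z x - gen Z x + gen Z x) \<in> ?HT" using tri_in[OF t] thomD[OF TT] by metis
    moreover have "(\<lambda>x. gen Z x - gen Z x + gen Z x) = r" using z(1) by auto
    ultimately show ?thesis by simp
  next
    case a
    from a(2) obtain X f g d where
      A1: "\<forall>i. 1 \<le> i \<and> i \<le> n - 1 \<longrightarrow> \<alpha> i \<in> thom T (A i) (A (i+1))" and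
      X1: "\<forall>i. 1 \<le> i \<and> i \<le> n - 3 \<longrightarrow> X i \<in> obj T \<and>
              f i \<in> thom T (A (i+1)) (X i) \<and> g i \<in> thom T (X i) (A (i+2))" and
      t1: "(\<alpha> 1, f 1, d (n-2)) \<in> dtri T" and
      tm: "\<forall>i. 2 \<le> i \<and> i \<le> n - 3 \<longrightarrow> (g (i-1), f i, d (n-1-i)) \<in> dtri T" and
      tl: "(g (n-3), \<alpha> (n-1), d 1) \<in> dtri T"
      unfolding is_n_angle_def by blast
    have r1: "(\<lambda>x. gen (A 1) x - gen (A 2) x + gen (X 1) x) \<in> ?HT"
    proof (rule tri_in[OF t1])
      have "\<alpha> 1 \<in> thom T (A 1) (A (1+1))" using A1[rule_format, of 1] n by auto
      then show "src T (\<alpha> 1) = A 1" "tgt T (\<alpha> 1) = A 2" using thomD[OF TT] by (auto simp: numeral_2_eq_2)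
      have "1 \<le> n - 3" using n by simp
      then have "f 1 \<in> thom T (A (1+1)) (X 1)" using X1[rule_format, of 1] by blast
      then show "tgt T (f 1) = X 1" using thomD[OF TT] by blast
    qed
    have rm: "\<forall>i. 2 \<le> i \<and> i \<le> n-3 \<longrightarrow> (\<lambda>x. gen (X (i-1)) x - gen (A (i+1)) x + gen (X i) x) \<in> ?HT"
    proof (intro allI impI)
      fix i assume i: "2 \<le> i \<and> i \<le> n-3"
      show "(\<lambda>x. gen (X (i-1)) x - gen (A (i+1)) x + gen (X i) x) \<in> ?HT"
      proof (rule tri_in[OF tm[rule_format, OF i]])
        have "1 \<le> i-1 \<and> i-1 \<le> n-3" using i by auto
        then have "g (i-1) \<in> thom T (X (i-1)) (A (i-1+2))" using X1[rule_format, of "i-1"] by blast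
        moreover have "i - 1 + 2 = i + 1" using i by simp
        ultimately show "src T (g (i-1)) = X (i-1)" "tgt T (g (i-1)) = A (i+1)" using thomD[OF TT] by auto
        show "tgt T (f i) = X i" using X1[rule_format, of i] i thomD[OF TT] by auto
      qed
    qed
    have rl: "(\<lambda>x. gen (X (n-3)) x - gen (A (n-1)) x + gen (A n) x) \<in> ?HT"
    proof (rule tri_in[OF tl])
      have "g (n-3) \<in> thom T (X (n-3)) (A (n-3+2))" using X1[rule_format, of "n-3"] n by auto
      moreover have "n - 3 + 2 = n - 1" using n by simp
      ultimately show "src T (g (n-3)) = X (n-3)" "tgt T (g (n-3)) = A (n-1)" using thomD[OF TT] by auto
      have "\<alpha> (n-1) \<in> thom T (A (n-1)) (A (n-1+1))" using A1[rule_format, of "n-1"] n by auto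
      moreover have "n - 1 + 1 = n" using n by simp
      ultimately show "tgt T (\<alpha> (n-1)) = A n" using thomD[OF TT] by auto
    qed
    show ?thesis using telescope[OF sg n r1 rm rl] a(1) by simp
  qed
qed

lemma HC_sub_HT:
  assumes TT: "is_triangulated T" and n: "n \<ge> 4" and Csub: "C \<subseteq> obj T"
  shows "generate (free_ab C) (iso_rels T C \<union> angle_rels n T C)
     \<subseteq> generate (free_ab (obj T)) (iso_rels T (obj T) \<union> tri_rels T)"
proof
  let ?HT = "generate (free_ab (obj T)) (iso_rels T (obj T) \<union> tri_rels T)"
  have sg: "subgroup ?HT (free_ab (obj T))"
    using gen_subgroup iso_rels_carrier tri_rels_carrier[OF TT] by (metis Un_subset_iff)
  have RC: "iso_rels T C \<union> angle_rels n T C \<subseteq> carrier (free_ab C)"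
    using iso_rels_carrier angle_rels_carrier by blast
  fix h assume "h \<in> generate (free_ab C) (iso_rels T C \<union> angle_rels n T C)"
  then show "h \<in> ?HT"
  proof induction
    case one then show ?case using sg_zero[OF sg] by simp
  next
    case (incl h) then show ?case using RC_in_HT[OF TT n Csub] by blast
  next
    case (inv h)
    then have "h \<in> ?HT" using RC_in_HT[OF TT n Csub] by blast
    moreover have "inv\<^bsub>free_ab C\<^esub> h = (\<lambda>x. - h x)" using free_ab_inv inv RC by blast
    ultimately show ?case using sg_neg[OF sg] by simp
  next
    case (eng h1 h2) then show ?case using sg_add[OF sg] by simp
  qed
qed

lemma gen_Q:
  assumes TT: "is_triangulated T" and ct: "cluster_tilting t T C"
    and sg: "subgroup H (free_ab (obj T))" and tr: "tri_rels T \<subseteq> H" and X: "X \<in> obj T"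
  shows "\<exists>d\<in>carrier (free_ab C). (\<lambda>x. gen X x - d x) \<in> H"
proof -
  have main: "j \<le> t - 1 \<longrightarrow> (\<forall>X\<in>obj T. Vset T C (t - 1 - j) X \<longrightarrow> (\<exists>d\<in>carrier (free_ab C). (\<lambda>x. gen X x - d x) \<in> H))" for j
  proof (induction j)
    case 0
    show ?case
    proof (intro impI ballI)
      fix X assume "X \<in> obj T" "Vset T C (t - 1 - 0) X"
      then have "X \<in> C" using C_mem[OF TT ct] by simp
      then show "\<exists>d\<in>carrier (free_ab C). (\<lambda>x. gen X x - d x) \<in> H"
        using gen_carrier sg_zero[OF sg] by (intro bexI[of _ "gen X"]) auto
    qed
  next
    case (Suc j)
    show ?case
    proof (intro impI ballI)
      fix X assume j: "Suc j \<le> t - 1" and X: "X \<in> obj T" and V: "Vset T C (t - 1 - Suc j) X"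
      obtain C0 X1 where C0: "C0 \<in> C" and X1: "X1 \<in> obj T"
        and rel: "(\<lambda>x. gen X x - gen C0 x + gen X1 x) \<in> tri_rels T"
        and van: "\<forall>B\<in>C. \<forall>i. 1 \<le> i \<and> i \<le> t - 1 \<and>
        (2 \<le> i \<longrightarrow> thom T X ((susp T ^^ (i-1)) B) = {mzero T X ((susp T ^^ (i-1)) B)})
        \<longrightarrow> thom T X1 ((susp T ^^ i) B) = {mzero T X1 ((susp T ^^ i) B)}"
        using resolution_step[OF TT ct X] by blast
      have "Vset T C (t - 1 - j) X1"
        unfolding Vset_def
      proof (intro ballI allI impI)
        fix B i assume B: "B \<in> C" and i: "1 \<le> i \<and> i \<le> t - 1 - j"
        have "2 \<le> i \<longrightarrow> thom T X ((susp T ^^ (i-1)) B) = {mzero T X ((susp T ^^ (i-1)) B)}"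
        proof
          assume "2 \<le> i"
          then have "1 \<le> i - 1 \<and> i - 1 \<le> t - 1 - Suc j" using i j by auto
          then show "thom T X ((susp T ^^ (i-1)) B) = {mzero T X ((susp T ^^ (i-1)) B)}"
            using V B unfolding Vset_def by blast
        qed
        then show "thom T X1 ((susp T ^^ i) B) = {mzero T X1 ((susp T ^^ i) B)}"
          using van B i by auto
      qed
      then obtain d1 where d1: "d1 \<in> carrier (free_ab C)" "(\<lambda>x. gen X1 x - d1 x) \<in> H"
        using Suc j X1 by auto
      have rH: "(\<lambda>x. gen X x - gen C0 x + gen X1 x) \<in> H" using rel tr by blast
      have "(\<lambda>x. (gen X x - gen C0 x + gen X1 x) - (gen X1 x - d1 x)) \<in> H"
        using sg_diff[OF sg rH d1(2)] by simp
      moreover have "(\<lambda>x. (gen X x - gen C0 x + gen X1 x) - (gen X1 x - d1 x)) = (\<lambda>x. gen X x - (gen C0 x + - d1 x))"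
        by (rule ext) simp
      moreover have "(\<lambda>x. gen C0 x + - d1 x) \<in> carrier (free_ab C)"
        using free_ab_add_closed[OF gen_carrier[OF C0] free_ab_neg_closed[OF d1(1)]] .
      ultimately have "(\<lambda>x. gen X x - (\<lambda>x. gen C0 x + - d1 x) x) \<in> H"
        "(\<lambda>x. gen C0 x + - d1 x) \<in> carrier (free_ab C)" by simp_all
      then show "\<exists>d\<in>carrier (free_ab C). (\<lambda>x. gen X x - d x) \<in> H"
        by (intro bexI[where x="\<lambda>x. gen C0 x + - d1 x"]) auto
    qed
  qed
  have "Vset T C 0 X" unfolding Vset_def by auto
  then show ?thesis using main[of "t - 1"] X by simp
qed


lemma all_Q:
  assumes sg: "subgroup H (free_ab S)"
    and genQ: "\<forall>X\<in>S. \<exists>d\<in>carrier (free_ab C). (\<lambda>x. gen X x - d x) \<in> H"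
    and c: "c \<in> carrier (free_ab S)"
  shows "\<exists>d\<in>carrier (free_ab C). (\<lambda>x. c x - d x) \<in> H"
proof -
  define Q where "Q c \<longleftrightarrow> (\<exists>d\<in>carrier (free_ab C). (\<lambda>x. c x - d x) \<in> H)" for c :: "'a \<Rightarrow> int"
  have Qadd: "Q (\<lambda>x. a x + b x)" if qa: "Q a" and qb: "Q b" for a b
  proof -
    obtain da db where d: "da \<in> carrier (free_ab C)" "(\<lambda>x. a x - da x) \<in> H"
      "db \<in> carrier (free_ab C)" "(\<lambda>x. b x - db x) \<in> H" using qa qb unfolding Q_def by blast
    have "(\<lambda>x. (a x - da x) + (b x - db x)) \<in> H" using sg_add[OF sg d(2) d(4)] by simp
    moreover have "(\<lambda>x. (a x - da x) + (b x - db x)) = (\<lambda>x. (a x + b x) - (\<lambda>x. da x + db x) x)" by auto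
    ultimately show ?thesis unfolding Q_def using free_ab_add_closed[OF d(1) d(3)] by metis
  qed
  have Qneg: "Q (\<lambda>x. - a x)" if qa: "Q a" for a
  proof -
    obtain da where d: "da \<in> carrier (free_ab C)" "(\<lambda>x. a x - da x) \<in> H"
      using qa unfolding Q_def by blast
    have "(\<lambda>x. - (a x - da x)) \<in> H" using sg_neg[OF sg d(2)] by simp
    moreover have "(\<lambda>x. - (a x - da x)) = (\<lambda>x. (- a x) - (\<lambda>x. - da x) x)" by auto
    ultimately show ?thesis unfolding Q_def using free_ab_neg_closed[OF d(1)] by metis
  qed
  have Q0: "Q (\<lambda>x. 0)" unfolding Q_def
  proof (rule bexI[of _ "\<lambda>x. 0"])
    show "(\<lambda>x. 0) \<in> carrier (free_ab C)" unfolding free_ab_carrier by simp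
    show "(\<lambda>x. (0::int) - 0) \<in> H" using sg_zero[OF sg] by simp
  qed
  have Qgen: "Q (gen X)" if "X \<in> S" for X using genQ that unfolding Q_def by blast
  have Qnat: "Q (\<lambda>x. int m * gen X x)" if "X \<in> S" for m X
  proof (induction m)
    case 0 then show ?case using Q0 by simp
  next
    case (Suc m)
    have "Q (\<lambda>x. int m * gen X x + gen X x)" using Qadd[OF Suc Qgen[OF that]] .
    moreover have "(\<lambda>x. int m * gen X x + gen X x) = (\<lambda>x. int (Suc m) * gen X x)"
      by (auto simp: algebra_simps)
    ultimately show ?case by simp
  qed
  have Qint: "Q (\<lambda>x. k * gen X x)" if "X \<in> S" for k X
  proof (cases "k \<ge> 0")
    case True
    then have "(\<lambda>x. k * gen X x) = (\<lambda>x. int (nat k) * gen X x)" by simp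
    then show ?thesis using Qnat[OF that, of "nat k"] by simp
  next
    case False
    then have "(\<lambda>x. k * gen X x) = (\<lambda>x. - (int (nat (-k)) * gen X x))" by simp
    then show ?thesis using Qneg[OF Qnat[OF that, of "nat (-k)"]] by simp
  qed
  have Qsum: "finite D \<Longrightarrow> D \<subseteq> S \<Longrightarrow> Q (\<lambda>x. \<Sum>y\<in>D. c y * gen y x)" for D
  proof (induction D rule: finite_induct)
    case empty then show ?case using Q0 by simp
  next
    case (insert y D)
    have "Q (\<lambda>x. c y * gen y x + (\<Sum>y\<in>D. c y * gen y x))"
      using Qadd[OF Qint insert.IH] insert.prems by auto
    then show ?case using insert.hyps by simp
  qed
  let ?D = "{x. c x \<noteq> 0}"
  have D: "finite ?D" "?D \<subseteq> S" using c unfolding free_ab_carrier by auto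
  have "(\<lambda>x. \<Sum>y\<in>?D. c y * gen y x) = c"
  proof
    fix x
    have "(\<Sum>y\<in>?D. c y * gen y x) = (\<Sum>y\<in>?D. if y = x then c y else 0)"
      by (rule sum.cong) (auto simp: gen_def)
    also have "\<dots> = (if x \<in> ?D then c x else 0)" using D(1) by (simp add: sum.delta')
    also have "\<dots> = c x" by auto
    finally show "(\<Sum>y\<in>?D. c y * gen y x) = c x" .
  qed
  then have "Q c" using Qsum[OF D] by simp
  then show ?thesis unfolding Q_def .
qed


theorem theorem3p1:
  fixes T :: "('o,'m) tricat" and C :: "'o set" and n :: nat
  assumes "is_triangulated T"
    and "n \<ge> 4"
    and "cluster_tilting (n - 2) T C"
    and "\<forall>A\<in>C. (susp T ^^ (n - 2)) A \<in> C"
  shows "\<exists>\<phi>. \<phi> \<in> hom (K0_ang n T C) (K0_tri T) \<and>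
           \<phi> ` carrier (K0_ang n T C) = carrier (K0_tri T) \<and>
           (\<forall>A\<in>C. \<forall>B\<in>C.
              \<phi> (cls_ang n T C A \<otimes>\<^bsub>K0_ang n T C\<^esub> inv\<^bsub>K0_ang n T C\<^esub> cls_ang n T C B)
                = cls_tri T A \<otimes>\<^bsub>K0_tri T\<^esub> inv\<^bsub>K0_tri T\<^esub> cls_tri T B)"
proof -
  note TT = assms(1) and n = assms(2) and ct = assms(3)
  define FC where "FC = free_ab C"
  define FT where "FT = free_ab (obj T)"
  define HC where "HC = generate (free_ab C) (iso_rels T C \<union> angle_rels n T C)"
  define HT where "HT = generate (free_ab (obj T)) (iso_rels T (obj T) \<union> tri_rels T)"
  have Csub: "C \<subseteq> obj T" using C_sub[OF TT ct] .
  have sgT: "subgroup HT FT" unfolding HT_def FT_def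
    using gen_subgroup iso_rels_carrier tri_rels_carrier[OF TT] by (metis Un_subset_iff)
  have sgC: "subgroup HC FC" unfolding HC_def FC_def
    using gen_subgroup iso_rels_carrier angle_rels_carrier by (metis Un_subset_iff)
  have gT: "group FT" and gC: "group FC" unfolding FT_def FC_def using free_ab_group by auto
  have nT: "HT \<lhd> FT" unfolding FT_def
    using comm_group.subgroup_imp_normal[OF free_ab_comm_group] sgT FT_def by blast
  have nC: "HC \<lhd> FC" unfolding FC_def
    using comm_group.subgroup_imp_normal[OF free_ab_comm_group] sgC FC_def by blast
  have sub: "HC \<subseteq> HT" unfolding HC_def HT_def using HC_sub_HT[OF TT n Csub] .
  have carr: "carrier FC \<subseteq> carrier FT" unfolding FC_def FT_def using Csub by (auto simp: free_ab_carrier subset_iff)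
  define h where "h = (\<lambda>c. HT #>\<^bsub>FT\<^esub> c)"
  have multeq: "x \<otimes>\<^bsub>FC\<^esub> y = x \<otimes>\<^bsub>FT\<^esub> y" for x y unfolding FC_def FT_def by simp
  have hom: "h \<in> hom FC (FT Mod HT)"
  proof (rule homI)
    fix x assume "x \<in> carrier FC"
    then show "h x \<in> carrier (FT Mod HT)" unfolding h_def carrier_FactGroup using carr by blast
  next
    fix x y assume xy: "x \<in> carrier FC" "y \<in> carrier FC"
    then show "h (x \<otimes>\<^bsub>FC\<^esub> y) = h x \<otimes>\<^bsub>FT Mod HT\<^esub> h y"
      unfolding h_def multeq using normal.rcos_sum[OF nT] carr by auto
  qed
  have invC: "x \<otimes>\<^bsub>FC\<^esub> inv\<^bsub>FC\<^esub> y = (\<lambda>z. x z - y z)" if "y \<in> carrier FC" for x y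
    using free_ab_inv[of y C] that unfolding FC_def by simp
  have invT: "x \<otimes>\<^bsub>FT\<^esub> inv\<^bsub>FT\<^esub> y = (\<lambda>z. x z - y z)" if "y \<in> carrier FT" for x y
    using free_ab_inv[of y "obj T"] that unfolding FT_def by simp
  have wd: "h x = h y" if xy: "x \<in> carrier FC" "y \<in> carrier FC" "HC #>\<^bsub>FC\<^esub> x = HC #>\<^bsub>FC\<^esub> y" for x y
  proof -
    have "x \<in> HC #>\<^bsub>FC\<^esub> y" using group.rcos_self[OF gC xy(1) sgC] xy(3) by simp
    then have "x \<otimes>\<^bsub>FC\<^esub> inv\<^bsub>FC\<^esub> y \<in> HC" using subgroup.rcos_module_imp[OF sgC gC xy(2)] by blast
    moreover have "y \<in> carrier FT" using carr xy(2) by blast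
    ultimately have "x \<otimes>\<^bsub>FT\<^esub> inv\<^bsub>FT\<^esub> y \<in> HT" using sub invC[OF xy(2)] invT by auto
    then have "x \<in> HT #>\<^bsub>FT\<^esub> y" using subgroup.rcos_module_rev[OF sgT gT] carr xy by blast
    then have "HT #>\<^bsub>FT\<^esub> y = HT #>\<^bsub>FT\<^esub> x" using group.repr_independence[OF gT _ _ sgT] carr xy by blast
    then show ?thesis unfolding h_def by simp
  qed
  obtain g where g: "g \<in> hom (FC Mod HC) (FT Mod HT)" "\<And>x. x \<in> carrier FC \<Longrightarrow> g (HC #>\<^bsub>FC\<^esub> x) = h x"
    using FactGroup_universal[OF hom nC wd] by blast
  have gh: "group_hom (FC Mod HC) (FT Mod HT) g"
    unfolding group_hom_def group_hom_axioms_def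
    using g(1) normal.factorgroup_is_group[OF nC] normal.factorgroup_is_group[OF nT] by blast
  have K0a: "K0_ang n T C = FC Mod HC" unfolding K0_ang_def FC_def HC_def ..
  have K0t: "K0_tri T = FT Mod HT" unfolding K0_tri_def FT_def HT_def ..
  have clsa: "cls_ang n T C A = HC #>\<^bsub>FC\<^esub> gen A" for A unfolding cls_ang_def FC_def HC_def ..
  have clst: "cls_tri T A = HT #>\<^bsub>FT\<^esub> gen A" for A unfolding cls_tri_def FT_def HT_def ..
  have surj: "g ` carrier (FC Mod HC) = carrier (FT Mod HT)"
  proof
    show "g ` carrier (FC Mod HC) \<subseteq> carrier (FT Mod HT)" using g(1) hom_carrier by blast
  next
    show "carrier (FT Mod HT) \<subseteq> g ` carrier (FC Mod HC)"
    proof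
      fix U assume "U \<in> carrier (FT Mod HT)"
      then obtain c where c: "c \<in> carrier FT" "U = HT #>\<^bsub>FT\<^esub> c" unfolding carrier_FactGroup by blast
      have genQ: "\<forall>X\<in>obj T. \<exists>d\<in>carrier (free_ab C). (\<lambda>x. gen X x - d x) \<in> HT"
        using gen_Q[OF TT ct, of HT] sgT unfolding HT_def FT_def by (auto intro: generate.incl)
      obtain d where d: "d \<in> carrier FC" "(\<lambda>x. c x - d x) \<in> HT"
        using all_Q[of HT "obj T" C c] sgT genQ c unfolding FT_def FC_def by blast
      have "d \<in> carrier FT" using carr d(1) by blast
      then have "c \<otimes>\<^bsub>FT\<^esub> inv\<^bsub>FT\<^esub> d \<in> HT" using d invT by auto
      then have "c \<in> HT #>\<^bsub>FT\<^esub> d" using subgroup.rcos_module_rev[OF sgT gT] carr d c by blast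
      then have "HT #>\<^bsub>FT\<^esub> d = U" using group.repr_independence[OF gT _ _ sgT] carr d c by blast
      moreover have "HC #>\<^bsub>FC\<^esub> d \<in> carrier (FC Mod HC)" unfolding carrier_FactGroup using d by blast
      ultimately show "U \<in> g ` carrier (FC Mod HC)" using g(2)[OF d(1)] unfolding h_def by force
    qed
  qed
  show ?thesis unfolding K0a K0t
  proof (intro exI[of _ g] conjI ballI)
    show "g \<in> hom (FC Mod HC) (FT Mod HT)" using g(1) .
    show "g ` carrier (FC Mod HC) = carrier (FT Mod HT)" using surj .
  next
    fix A B assume A: "A \<in> C" and B: "B \<in> C"
    have gA: "gen A \<in> carrier FC" and gB: "gen B \<in> carrier FC" unfolding FC_def using gen_carrier[OF A] gen_carrier[OF B] by auto
    have ca: "cls_ang n T C A \<in> carrier (FC Mod HC)" "cls_ang n T C B \<in> carrier (FC Mod HC)"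
      unfolding clsa carrier_FactGroup using gA gB by auto
    have "g (cls_ang n T C A \<otimes>\<^bsub>FC Mod HC\<^esub> inv\<^bsub>FC Mod HC\<^esub> cls_ang n T C B)
        = g (cls_ang n T C A) \<otimes>\<^bsub>FT Mod HT\<^esub> inv\<^bsub>FT Mod HT\<^esub> g (cls_ang n T C B)"
      using group_hom.hom_mult[OF gh] group_hom.hom_inv[OF gh] ca
        group.inv_closed[OF normal.factorgroup_is_group[OF nC]] by simp
    also have "\<dots> = cls_tri T A \<otimes>\<^bsub>FT Mod HT\<^esub> inv\<^bsub>FT Mod HT\<^esub> cls_tri T B"
      unfolding clsa clst using g(2) gA gB unfolding h_def by simp
    finally show "g (cls_ang n T C A \<otimes>\<^bsub>FC Mod HC\<^esub> inv\<^bsub>FC Mod HC\<^esub> cls_ang n T C B)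
        = cls_tri T A \<otimes>\<^bsub>FT Mod HT\<^esub> inv\<^bsub>FT Mod HT\<^esub> cls_tri T B" .
  qed
qed

end
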